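(* Let $n\ge 3$ and let $a(s)=s^n+a_1s^{n-1}+\cdots+a_n$ and $b(s)=s^n+b_1s^{n-1}+\cdots+b_n$ be real Hurwitz stable polynomials. Suppose $\Omega^a\cap\Omega^b\neq\emptyset$ (sets defined in the context), take $(x_1,\dots,x_{n-1})\in\Omega^a\cap\Omega^b$, and for $\varepsilon>0$ let $c_\varepsilon(s):=s^{n-1}+(x_1-\varepsilon)s^{n-2}+x_2s^{n-3}+\cdots+x_{n-2}s+(x_{n-1}+\varepsilon)$. Then there exists $\varepsilon_0>0$ such that for every $\varepsilon\in(0,\varepsilon_0)$ we have $\mathrm{Re}\left[\frac{c_\varepsilon(j\omega)}{a(j\omega)}\right]>0$ and $\mathrm{Re}\left[\frac{c_\varepsilon(j\omega)}{b(j\omega)}\right]>0$ for all $\omega\in\mathbb{R}$.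
   Context: A real polynomial is Hurwitz stable if all its roots lie in the open left half-plane. For $x=(x_1,\dots,x_{n-1})\in\mathbb{R}^{n-1}$ and $l=1,\dots,n$ define $c_l(x):=\sum_{j=0}^{n}(-1)^{l+j}a_jx_{2l-j-1}$ and $d_l(x):=\sum_{j=0}^{n}(-1)^{l+j}b_jx_{2l-j-1}$, with $a_0=b_0=1$, $x_0=1$, $a_i=b_i=0$ if $i<0$ or $i>n$, and $x_i=0$ if $i<0$ or $i>n-1$. For $k\in\{1,\dots,n-2\}$ let $\Omega^a_{ek}:=\{x: c_{k+1}^2-4c_kc_{k+2}<0,\ c_l=0 \text{ for } l\in\{1,\dots,n\}\setminus\{k,k+1,k+2\}\}$ and $\Omega^b_{ek}:=\{x: d_{k+1}^2-4d_kd_{k+2}<0,\ d_l=0 \text{ for } l\in\{1,\dots,n\}\setminus\{k,k+1,k+2\}\}$. For points $A,B\in\mathbb{R}^{n-1}$, $(A,B)$ denotes the open line segment joining $A$ and $B$ (endpoints excluded). Define $\Omega^a$ as the union, over all pairs $1\le i<j\le n-2$ and all points $A_i\in\Omega^a_{ei}$, $A_j\in\Omega^a_{ej}$, of the open segments $(A_i,A_j)$; define $\Omega^b$ analogously using $\Omega^b_{ei},\Omega^b_{ej}$. *)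

theory Defs
  imports Complex_Main
begin

definition mpoly :: "nat \<Rightarrow> (nat \<Rightarrow> real) \<Rightarrow> complex \<Rightarrow> complex" where
  "mpoly n a z = z ^ n + (\<Sum>j=1..n. complex_of_real (a j) * z ^ (n - j))"

definition hurwitz_stable :: "nat \<Rightarrow> (nat \<Rightarrow> real) \<Rightarrow> bool" where
  "hurwitz_stable n a \<longleftrightarrow> (\<forall>z. mpoly n a z = 0 \<longrightarrow> Re z < 0)"

definition acoef :: "nat \<Rightarrow> (nat \<Rightarrow> real) \<Rightarrow> int \<Rightarrow> real" where
  "acoef n a i = (if i = 0 then 1 else if 1 \<le> i \<and> i \<le> int n then a (nat i) else 0)"

definition xcoef :: "nat \<Rightarrow> (nat \<Rightarrow> real) \<Rightarrow> int \<Rightarrow> real" where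
  "xcoef n x i = (if i = 0 then 1 else if 1 \<le> i \<and> i \<le> int n - 1 then x (nat i) else 0)"

definition cfun :: "nat \<Rightarrow> (nat \<Rightarrow> real) \<Rightarrow> (nat \<Rightarrow> real) \<Rightarrow> nat \<Rightarrow> real" where
  "cfun n a x l = (\<Sum>j=0..n. (-1) ^ (l + j) * acoef n a (int j) * xcoef n x (2 * int l - int j - 1))"

text \<open>Points of R^(n-1) are functions nat \<Rightarrow> real of which only coordinates 1..n-1 matter.\<close>
definition Omega_e :: "nat \<Rightarrow> (nat \<Rightarrow> real) \<Rightarrow> nat \<Rightarrow> (nat \<Rightarrow> real) set" where
  "Omega_e n a k = {x. (cfun n a x (k+1))\<^sup>2 - 4 * cfun n a x k * cfun n a x (k+2) < 0 \<and>
                       (\<forall>l\<in>{1..n} - {k, k+1, k+2}. cfun n a x l = 0)}"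

definition in_open_seg :: "nat \<Rightarrow> (nat \<Rightarrow> real) \<Rightarrow> (nat \<Rightarrow> real) \<Rightarrow> (nat \<Rightarrow> real) \<Rightarrow> bool" where
  "in_open_seg n A B x \<longleftrightarrow> (\<exists>k\<in>{1..n-1}. A k \<noteq> B k) \<and>
     (\<exists>t::real. 0 < t \<and> t < 1 \<and> (\<forall>k\<in>{1..n-1}. x k = (1 - t) * A k + t * B k))"

definition Omega :: "nat \<Rightarrow> (nat \<Rightarrow> real) \<Rightarrow> (nat \<Rightarrow> real) set" where
  "Omega n a = {x. \<exists>i j A B. 1 \<le> i \<and> i < j \<and> j \<le> n - 2 \<and>
                    A \<in> Omega_e n a i \<and> B \<in> Omega_e n a j \<and> in_open_seg n A B x}"

definition ceps :: "nat \<Rightarrow> (nat \<Rightarrow> real) \<Rightarrow> real \<Rightarrow> complex \<Rightarrow> complex" where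
  "ceps n x \<epsilon> z = z ^ (n - 1) + complex_of_real (x 1 - \<epsilon>) * z ^ (n - 2)
     + (\<Sum>k=2..n-2. complex_of_real (x k) * z ^ (n - 1 - k)) + complex_of_real (x (n - 1) + \<epsilon>)"

end

theory Submission
  imports Defs "HOL-Complex_Analysis.Complex_Analysis"
begin


definition gp :: "nat \<Rightarrow> (nat \<Rightarrow> real) \<Rightarrow> complex \<Rightarrow> complex" where
  "gp m c z = z ^ m + (\<Sum>k=1..m. complex_of_real (c k) * z ^ (m - k))"

lemma mpoly_gp: "mpoly n a = gp n a"
  by (rule ext) (simp add: mpoly_def gp_def)

lemma gp_div_eq:
  assumes "z \<noteq> 0"
  shows "gp m c z / z ^ m = 1 + (\<Sum>k=1..m. complex_of_real (c k) * inverse z ^ k)"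
proof -
  have "gp m c z / z ^ m = 1 + (\<Sum>k=1..m. complex_of_real (c k) * z ^ (m - k) / z ^ m)"
    using assms by (simp add: gp_def add_divide_distrib sum_divide_distrib)
  also have "(\<Sum>k=1..m. complex_of_real (c k) * z ^ (m - k) / z ^ m) =
      (\<Sum>k=1..m. complex_of_real (c k) * inverse z ^ k)"
  proof (rule sum.cong)
    fix k assume "k \<in> {1..m}"
    then have "z ^ m = z ^ (m - k) * z ^ k" using power_add[of z "m-k" k] by simp
    then show "complex_of_real (c k) * z ^ (m - k) / z ^ m = complex_of_real (c k) * inverse z ^ k"
      using assms by (simp add: field_simps power_inverse)
  qed simp
  finally show ?thesis .
qed

lemma gp_lim: "((\<lambda>z. gp m c z / z ^ m) \<longlongrightarrow> 1) at_infinity"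
proof -
  have "((\<lambda>z. 1 + (\<Sum>k=1..m. complex_of_real (c k) * inverse z ^ k)) \<longlongrightarrow>
          1 + (\<Sum>k=1..m. complex_of_real (c k) * 0 ^ k)) at_infinity"
    by (intro tendsto_add tendsto_const tendsto_sum tendsto_mult tendsto_power tendsto_inverse_0)
  moreover have "(\<Sum>k=1..m. complex_of_real (c k) * 0 ^ k) = 0"
    by (rule sum.neutral) auto
  ultimately have L: "((\<lambda>z. 1 + (\<Sum>k=1..m. complex_of_real (c k) * inverse z ^ k)) \<longlongrightarrow> 1) at_infinity"
    by simp
  have E: "\<forall>\<^sub>F z in at_infinity. 1 + (\<Sum>k=1..m. complex_of_real (c k) * inverse z ^ k) = gp m c z / z ^ m"
    unfolding eventually_at_infinity
  proof (rule exI[of _ 1], intro allI impI)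
    fix z :: complex assume "1 \<le> norm z"
    then have "z \<noteq> 0" by auto
    then show "1 + (\<Sum>k=1..m. complex_of_real (c k) * inverse z ^ k) = gp m c z / z ^ m"
      by (simp add: gp_div_eq)
  qed
  show ?thesis using L E by (rule Lim_transform_eventually)
qed

lemma stable_nz: "hurwitz_stable n a \<Longrightarrow> 0 \<le> Re z \<Longrightarrow> mpoly n a z \<noteq> 0"
  unfolding hurwitz_stable_def by force

lemma Re_div_cnj: "Re (w / m) = Re (w * cnj m) / (cmod m)\<^sup>2"
  by (simp add: Re_divide')

lemma gp_holo: "gp m c holomorphic_on S"
  unfolding gp_def by (intro holomorphic_intros)

lemma aux_div:
  fixes A B w z :: complex
  assumes "z \<noteq> 0" "w \<noteq> 0"
  shows "(A / w) / (B / (w * z)) = A / B * z"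
  using assms by (cases "B = 0") (simp_all add: field_simps)

lemma sign_lemma:
  assumes st: "hurwitz_stable n a" and n: "n \<ge> 1"
    and Q: "\<And>\<omega>. Re (gp (n-1) y (\<i> * of_real \<omega>) * cnj (mpoly n a (\<i> * of_real \<omega>))) \<le> 0"
  shows False
proof -
  define h where "h z = gp (n-1) y z / mpoly n a z" for z
  have "((\<lambda>z. (gp (n-1) y z / z^(n-1)) / (gp n a z / z ^ n)) \<longlongrightarrow> 1 / 1) at_infinity"
    by (intro tendsto_divide gp_lim) simp
  moreover have "\<forall>\<^sub>F z in at_infinity. (gp (n-1) y z / z^(n-1)) / (gp n a z / z ^ n) = h z * z"
    unfolding eventually_at_infinity
  proof (rule exI[of _ 1], intro allI impI)
    fix z :: complex assume "1 \<le> norm z"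
    then have z: "z \<noteq> 0" by auto
    have zn: "z ^ n = z ^ (n-1) * z" using n by (cases n) (simp_all add: mult.commute)
    show "(gp (n-1) y z / z^(n-1)) / (gp n a z / z ^ n) = h z * z"
      unfolding h_def mpoly_gp zn by (rule aux_div[OF z]) (simp add: z)
  qed
  ultimately have glim: "((\<lambda>z. h z * z) \<longlongrightarrow> 1) at_infinity"
    by (simp add: Lim_transform_eventually)
  have "\<forall>\<^sub>F z in at_infinity. dist (h z * z) 1 < 1/2"
    using tendstoD[OF glim, of "1/2"] by simp
  then obtain R0 where R0: "\<And>z. R0 \<le> norm z \<Longrightarrow> norm (h z * z - 1) < 1/2"
    unfolding eventually_at_infinity dist_norm by blast
  define r0 where "r0 = max R0 1"
  have r0: "r0 \<ge> 1" "r0 \<ge> R0" unfolding r0_def by auto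
  define s0 where "s0 = complex_of_real r0"
  have "norm (h s0 * s0 - 1) < 1/2" using R0 r0 unfolding s0_def by simp
  then have "Re (h s0 * s0) > 1/2"
    using complex_Re_le_cmod[of "1 - h s0 * s0"] by (simp add: norm_minus_commute)
  then have "Re (h s0) * r0 > 1/2" unfolding s0_def by simp
  then have hs0: "Re (h s0) > 1 / (2 * r0)" using r0 by (simp add: field_simps)
  define \<rho> where "\<rho> = 4 * r0"
  define S where "S = {z. Re z \<ge> 0} \<inter> cball 0 \<rho>"
  have clS: "closed S" unfolding S_def by (intro closed_Int closed_halfspace_Re_ge closed_cball)
  have bS: "bounded S" unfolding S_def by (simp add: bounded_Int)
  have nzS: "\<And>z. z \<in> S \<Longrightarrow> mpoly n a z \<noteq> 0" using stable_nz[OF st] unfolding S_def by auto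
  have holS: "h holomorphic_on S"
    unfolding h_def mpoly_gp using nzS unfolding mpoly_gp
    by (intro holomorphic_intros gp_holo) auto
  have "Re (h s0) \<le> 3 / (2 * \<rho>)"
  proof (rule maximum_real_frontier[of h S])
    show "h holomorphic_on interior S" using holS interior_subset holomorphic_on_subset by blast
    show "continuous_on (closure S) h" using holS clS holomorphic_on_imp_continuous_on by (simp add: closure_closed)
    show "bounded S" by (rule bS)
    show "s0 \<in> S" unfolding S_def s0_def \<rho>_def using r0 by auto
  next
    fix z assume zf: "z \<in> frontier S"
    then have zS: "z \<in> S" using clS frontier_subset_closed by blast
    have zni: "z \<notin> interior S" using zf by (simp add: frontier_def)
    have "Re z = 0 \<or> norm z = \<rho>"
    proof (rule ccontr)
      assume "\<not> (Re z = 0 \<or> norm z = \<rho>)"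
      then have "z \<in> {z. Re z > 0} \<inter> ball 0 \<rho>" using zS unfolding S_def by auto
      moreover have "{z. Re z > 0} \<inter> ball 0 \<rho> \<subseteq> interior S"
        by (rule interior_maximal) (auto simp: S_def intro: open_Int open_halfspace_Re_gt)
      ultimately show False using zni by blast
    qed
    then show "Re (h z) \<le> 3 / (2 * \<rho>)"
    proof
      assume "Re z = 0"
      then have zz: "z = \<i> * of_real (Im z)" by (simp add: complex_eq_iff)
      have "Re (h z) = Re (gp (n-1) y z * cnj (mpoly n a z)) / (cmod (mpoly n a z))\<^sup>2"
        unfolding h_def by (rule Re_div_cnj)
      also have "\<dots> \<le> 0" using Q[of "Im z"] zz by (metis divide_nonpos_nonneg zero_le_power2)
      also have "0 \<le> 3 / (2 * \<rho>)" unfolding \<rho>_def using r0 by simp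
      finally show ?thesis .
    next
      assume nz: "norm z = \<rho>"
      then have "norm (h z * z - 1) < 1/2" using R0 r0 unfolding \<rho>_def by simp
      then have "norm (h z * z) < 3/2" using norm_triangle_ineq2[of "h z * z" 1] by simp
      then have "norm (h z) * \<rho> < 3/2" using nz by (simp add: norm_mult)
      then have "norm (h z) < 3 / (2 * \<rho>)" using r0 unfolding \<rho>_def by (simp add: field_simps)
      then show ?thesis using complex_Re_le_cmod[of "h z"] by linarith
    qed
  qed
  then have "Re (h s0) \<le> 3 / (8 * r0)" unfolding \<rho>_def by simp
  moreover have "3 / (8 * r0) < 1 / (2 * r0)" using r0 by (simp add: field_simps)
  ultimately show False using hs0 by linarith
qed

lemma neg1_pow_eq: "even (p + q) \<Longrightarrow> (-1::real) ^ p = (-1) ^ q"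
  by (metis even_add neg_one_even_power neg_one_odd_power)

lemma per_j:
  fixes A \<omega> :: real
  assumes j: "j \<le> n" and n: "n \<ge> 1"
  shows "(\<Sum>l\<in>{1..n}. (-1) ^ (l + j) * A * xcoef n y (2 * int l - int j - 1) * \<omega> ^ (2 * (n - l)))
       = (\<Sum>i\<in>{..<n}. xcoef n y (int i) * A *
            (if even (n - 1 - i + (n - j)) then (-1) ^ ((n - 1 - i + (n - j)) div 2 + (n - j)) * \<omega> ^ (n - 1 - i + (n - j)) else 0))"
    (is "sum ?g _ = sum ?h _")
proof -
  define S0 where "S0 = {l\<in>{1..n}. 0 \<le> 2 * int l - int j - 1 \<and> 2 * int l - int j - 1 \<le> int n - 1}"
  define T0 where "T0 = {i\<in>{..<n}. even (n - 1 - i + (n - j))}"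
  have "sum ?g {1..n} = sum ?g S0"
  proof (rule sum.mono_neutral_right)
    show "\<forall>l\<in>{1..n} - S0. ?g l = 0"
      unfolding S0_def xcoef_def by auto
  qed (auto simp: S0_def)
  also have "sum ?g S0 = sum ?h T0"
  proof (rule sum.reindex_bij_witness[where i = "\<lambda>i. (i + j + 1) div 2" and j = "\<lambda>l. nat (2 * int l - int j - 1)"])
    fix l assume "l \<in> S0"
    then have l: "1 \<le> l" "l \<le> n" "0 \<le> 2 * int l - int j - 1" "2 * int l - int j - 1 \<le> int n - 1"
      unfolding S0_def by auto
    show "(nat (2 * int l - int j - 1) + j + 1) div 2 = l" using l by arith
    have e: "n - 1 - nat (2 * int l - int j - 1) + (n - j) = 2 * (n - l)" using l j by arith
    have "nat (2 * int l - int j - 1) < n" using l by arith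
    then show "nat (2 * int l - int j - 1) \<in> T0" unfolding T0_def mem_Collect_eq lessThan_iff e by simp
    have s: "(-1::real) ^ (n - l + (n - j)) = (-1) ^ (l + j)"
      by (rule neg1_pow_eq) (use l j in presburger)
    show "?h (nat (2 * int l - int j - 1)) = ?g l"
      unfolding e using l s by simp
  next
    fix i assume "i \<in> T0"
    then have i: "i < n" "even (n - 1 - i + (n - j))" unfolding T0_def by auto
    have "n - 1 - i + (n - j) + (i + j + 1) = 2 * n" using i j by arith
    then have p: "even (i + j + 1)" using i(2) by (metis dvd_add_right_iff dvd_triv_left)
    then have d: "2 * ((i + j + 1) div 2) = i + j + 1" by simp
    then have d2: "2 * int ((i + j + 1) div 2) = int i + int j + 1" by linarith
    show "nat (2 * int ((i + j + 1) div 2) - int j - 1) = i" using d2 by simp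
    show "(i + j + 1) div 2 \<in> S0" unfolding S0_def using i j d d2 by auto
  qed
  also have "sum ?h T0 = sum ?h {..<n}"
  proof (rule sum.mono_neutral_left)
    show "\<forall>i\<in>{..<n} - T0. ?h i = 0" unfolding T0_def by auto
  qed (auto simp: T0_def)
  finally show ?thesis .
qed



lemma gp_xcoef:
  assumes n: "n \<ge> 1"
  shows "gp (n-1) y z = (\<Sum>i<n. complex_of_real (xcoef n y (int i)) * z ^ (n - 1 - i))"
proof -
  have U: "{..<n} = insert 0 {1..n-1}" using n by auto
  have "(\<Sum>i<n. complex_of_real (xcoef n y (int i)) * z ^ (n - 1 - i)) =
      z ^ (n - 1) + (\<Sum>i=1..n-1. complex_of_real (xcoef n y (int i)) * z ^ (n - 1 - i))"
    unfolding U by (simp add: xcoef_def)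
  also have "(\<Sum>i=1..n-1. complex_of_real (xcoef n y (int i)) * z ^ (n - 1 - i)) =
      (\<Sum>i=1..n-1. complex_of_real (y i) * z ^ (n - 1 - i))"
    by (rule sum.cong) (auto simp: xcoef_def of_nat_diff)
  finally show ?thesis unfolding gp_def by simp
qed

lemma mpoly_acoef:
  "mpoly n a z = (\<Sum>j\<le>n. complex_of_real (acoef n a (int j)) * z ^ (n - j))"
proof -
  have U: "{..n} = insert 0 {1..n}" by auto
  have "(\<Sum>j\<le>n. complex_of_real (acoef n a (int j)) * z ^ (n - j)) =
      z ^ n + (\<Sum>j=1..n. complex_of_real (acoef n a (int j)) * z ^ (n - j))"
    unfolding U by (simp add: acoef_def)
  also have "(\<Sum>j=1..n. complex_of_real (acoef n a (int j)) * z ^ (n - j)) =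
      (\<Sum>j=1..n. complex_of_real (a j) * z ^ (n - j))"
    by (rule sum.cong) (auto simp: acoef_def)
  finally show ?thesis unfolding mpoly_def by simp
qed

lemma Re_ipow:
  "Re ((\<i> * complex_of_real \<omega>) ^ p * cnj (\<i> * complex_of_real \<omega>) ^ q) =
     (if even (p + q) then (-1) ^ ((p + q) div 2 + q) * \<omega> ^ (p + q) else 0)"
proof -
  have e: "(\<i> * complex_of_real \<omega>) ^ p * cnj (\<i> * complex_of_real \<omega>) ^ q =
      complex_of_real ((-1) ^ q * \<omega> ^ (p + q)) * \<i> ^ (p + q)"
    by (simp add: power_mult_distrib power_add power_minus' algebra_simps)
  show ?thesis
  proof (cases "even (p + q)")
    case True
    then obtain k where k: "p + q = 2 * k" by blast
    have "\<i> ^ (p + q) = (-1) ^ k" unfolding k power_mult by simp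
    then show ?thesis unfolding e using True k by (simp add: power_add)
  next
    case False
    then obtain k where k: "p + q = 2 * k + 1" using oddE by blast
    have "\<i> ^ (p + q) = \<i> * (-1) ^ k" unfolding k power_add power_mult by simp
    then show ?thesis unfolding e using False by simp
  qed
qed


lemma Re_ofreal_mult: "Re (complex_of_real r * z) = r * Re z" by simp

lemma Q_identity:
  assumes n: "n \<ge> 1"
  shows "Re (gp (n-1) y (\<i> * complex_of_real \<omega>) * cnj (mpoly n a (\<i> * complex_of_real \<omega>)))
     = (\<Sum>l=1..n. cfun n a y l * \<omega> ^ (2 * (n - l)))"
proof -
  define w where "w = \<i> * complex_of_real \<omega>"
  define X where "X i = xcoef n y (int i)" for i
  define A where "A j = acoef n a (int j)" for j
  define G where "G j i = X i * A j * (if even (n - 1 - i + (n - j)) then (-1) ^ ((n - 1 - i + (n - j)) div 2 + (n - j)) * \<omega> ^ (n - 1 - i + (n - j)) else 0)" for j i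
  have c: "cnj (mpoly n a w) = (\<Sum>j\<le>n. complex_of_real (A j) * cnj w ^ (n - j))"
    unfolding mpoly_acoef A_def by simp
  have "gp (n-1) y w * cnj (mpoly n a w) =
      (\<Sum>i<n. \<Sum>j\<le>n. complex_of_real (X i) * w ^ (n - 1 - i) * (complex_of_real (A j) * cnj w ^ (n - j)))"
    unfolding c gp_xcoef[OF n] X_def sum_product ..
  also have "Re \<dots> = (\<Sum>i<n. \<Sum>j\<le>n. G j i)"
  proof -
    have "\<And>i j. Re (complex_of_real (X i) * w ^ (n - 1 - i) * (complex_of_real (A j) * cnj w ^ (n - j))) = G j i"
    proof -
      fix i j
      have "complex_of_real (X i) * w ^ (n - 1 - i) * (complex_of_real (A j) * cnj w ^ (n - j))
          = complex_of_real (X i * A j) * (w ^ (n - 1 - i) * cnj w ^ (n - j))" by simp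
      then show "Re (complex_of_real (X i) * w ^ (n - 1 - i) * (complex_of_real (A j) * cnj w ^ (n - j))) = G j i"
        unfolding G_def w_def by (simp only: Re_ofreal_mult Re_ipow)
    qed
    then show ?thesis by simp
  qed
  also have "\<dots> = (\<Sum>j\<le>n. \<Sum>i<n. G j i)" by (rule sum.swap)
  also have "\<dots> = (\<Sum>j\<le>n. \<Sum>l\<in>{1..n}. (-1) ^ (l + j) * A j * xcoef n y (2 * int l - int j - 1) * \<omega> ^ (2 * (n - l)))"
  proof (rule sum.cong[OF refl])
    fix j assume "j \<in> {..n}"
    then have j: "j \<le> n" by simp
    show "(\<Sum>i<n. G j i) = (\<Sum>l\<in>{1..n}. (-1) ^ (l + j) * A j * xcoef n y (2 * int l - int j - 1) * \<omega> ^ (2 * (n - l)))"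
      unfolding G_def X_def by (rule per_j[OF j n, symmetric])
  qed
  also have "\<dots> = (\<Sum>l\<in>{1..n}. \<Sum>j\<le>n. (-1) ^ (l + j) * A j * xcoef n y (2 * int l - int j - 1) * \<omega> ^ (2 * (n - l)))"
    by (rule sum.swap)
  also have "\<dots> = (\<Sum>l=1..n. cfun n a y l * \<omega> ^ (2 * (n - l)))"
    unfolding cfun_def A_def atLeast0AtMost sum_distrib_right by simp
  finally show ?thesis unfolding w_def .
qed



lemma xcoef_affine:
  assumes "\<forall>k\<in>{1..n-1}. y k = x k + \<epsilon> * (d k - e k)"
  shows "xcoef n y i = xcoef n x i + \<epsilon> * (xcoef n d i - xcoef n e i)"
proof -
  have "1 \<le> i \<Longrightarrow> i \<le> int n - 1 \<Longrightarrow> nat i \<in> {1..n-1}" by auto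
  then show ?thesis using assms unfolding xcoef_def by auto
qed

lemma cfun_affine:
  assumes "\<forall>k\<in>{1..n-1}. y k = x k + \<epsilon> * (d k - e k)"
  shows "cfun n a y l = cfun n a x l + \<epsilon> * (cfun n a d l - cfun n a e l)"
  unfolding cfun_def xcoef_affine[OF assms]
  by (simp add: algebra_simps sum.distrib sum_subtractf sum_distrib_left)

lemma cfun_1:
  assumes "n \<ge> 2"
  shows "cfun n a y 1 = a 1 - y 1"
proof -
  have U: "{0..n} = insert 0 (insert 1 {2..n})" using assms by auto
  have "(\<Sum>j\<in>{2..n}. (-1) ^ (1 + j) * acoef n a (int j) * xcoef n y (2 * int 1 - int j - 1)) = 0"
    by (rule sum.neutral) (auto simp: xcoef_def)
  then show ?thesis unfolding cfun_def U using assms by (simp add: acoef_def xcoef_def)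
qed

lemma cfun_n:
  assumes "n \<ge> 2"
  shows "cfun n a y n = a n * y (n - 1)"
proof -
  have U: "{0..n} = insert n {0..<n}" by auto
  have "(\<Sum>j\<in>{0..<n}. (-1) ^ (n + j) * acoef n a (int j) * xcoef n y (2 * int n - int j - 1)) = 0"
    by (rule sum.neutral) (auto simp: xcoef_def)
  moreover have "(-1::real) ^ (n + n) = 1" by simp
  moreover have "nat (int n - 1) = n - 1" using assms by simp
  ultimately show ?thesis unfolding cfun_def U using assms by (simp add: acoef_def xcoef_def)
qed

definition pf :: "nat \<Rightarrow> (nat \<Rightarrow> real) \<Rightarrow> (nat \<Rightarrow> real) \<Rightarrow> real \<Rightarrow> real" where
  "pf n a y u = (\<Sum>l=1..n. cfun n a y l * u ^ (n - l))"

lemma Q_pf: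
  assumes "n \<ge> 1"
  shows "Re (gp (n-1) y (\<i> * complex_of_real \<omega>) * cnj (mpoly n a (\<i> * complex_of_real \<omega>))) = pf n a y (\<omega>\<^sup>2)"
  unfolding Q_identity[OF assms] pf_def by (simp add: power_mult)

lemma quad_pos:
  fixes c b d u :: real
  assumes "b\<^sup>2 - 4 * c * d < 0" "c > 0"
  shows "c * u\<^sup>2 + b * u + d > 0"
proof -
  have "4 * c * (c * u\<^sup>2 + b * u + d) = (2 * c * u + b)\<^sup>2 + (4 * c * d - b\<^sup>2)"
    by (simp add: power2_eq_square algebra_simps)
  moreover have "(2 * c * u + b)\<^sup>2 + (4 * c * d - b\<^sup>2) > 0" using assms(1) by (smt (verit) zero_le_power2)
  ultimately show ?thesis using assms(2) by (smt (verit) mult_pos_pos zero_less_mult_pos)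
qed

lemma pow_split2: "m = p + 2 \<Longrightarrow> (u::real) ^ m = u ^ p * u\<^sup>2" by (simp only: power_add)
lemma pow_split1: "m = p + 1 \<Longrightarrow> (u::real) ^ m = u ^ p * u" by (simp add: power_add)

lemma Omega_e_pos:
  assumes st: "hurwitz_stable n a" and n: "n \<ge> 3" and k: "1 \<le> k" "k \<le> n - 2"
    and A: "A \<in> Omega_e n a k"
  shows "\<And>u. u \<ge> 0 \<Longrightarrow> pf n a A u \<ge> 0" and "\<And>u. u > 0 \<Longrightarrow> pf n a A u > 0"
proof -
  define c0 where "c0 = cfun n a A k"
  define c1 where "c1 = cfun n a A (k+1)"
  define c2 where "c2 = cfun n a A (k+2)"
  have disc: "c1\<^sup>2 - 4 * c0 * c2 < 0" and zero: "\<forall>l\<in>{1..n} - {k, k+1, k+2}. cfun n a A l = 0"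
    using A unfolding Omega_e_def c0_def c1_def c2_def by auto
  have pfq: "pf n a A u = u ^ (n - k - 2) * (c0 * u\<^sup>2 + c1 * u + c2)" for u
  proof -
    have "pf n a A u = (\<Sum>l\<in>{k, k+1, k+2}. cfun n a A l * u ^ (n - l))"
      unfolding pf_def
      by (rule sum.mono_neutral_right) (use k n zero in auto)
    also have "\<dots> = c0 * u ^ (n - k) + c1 * u ^ (n - (k+1)) + c2 * u ^ (n - (k+2))"
      unfolding c0_def c1_def c2_def by simp
    also have "u ^ (n - k) = u ^ (n - k - 2) * u\<^sup>2"
      by (rule pow_split2) (use k in arith)
    also have "u ^ (n - (k+1)) = u ^ (n - k - 2) * u"
      by (rule pow_split1) (use k in arith)
    also have "n - (k+2) = n - k - 2" by simp
    finally show ?thesis by (simp add: algebra_simps)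
  qed
  have c0pos: "c0 > 0"
  proof (rule ccontr)
    assume "\<not> c0 > 0"
    moreover have "c0 \<noteq> 0" using disc by (smt (verit) mult_eq_0_iff zero_le_power2)
    ultimately have neg: "-c0 > 0" by simp
    have qq: "\<And>u. (-c0) * u\<^sup>2 + (-c1) * u + (-c2) > 0"
      by (rule quad_pos) (use disc neg in auto)
    have qneg: "c0 * u\<^sup>2 + c1 * u + c2 < 0" for u using qq[of u] by linarith
    show False
    proof (rule sign_lemma[OF st, of A])
      show "1 \<le> n" using n by simp
      fix \<omega> :: real
      show "Re (gp (n-1) A (\<i> * complex_of_real \<omega>) * cnj (mpoly n a (\<i> * complex_of_real \<omega>))) \<le> 0"
        unfolding Q_pf[OF \<open>1 \<le> n\<close>] pfq
        using qneg[of "\<omega>\<^sup>2"] by (simp add: mult_nonneg_nonpos)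
    qed
  qed
  have qpos: "\<And>u. c0 * u\<^sup>2 + c1 * u + c2 > 0" by (rule quad_pos[OF disc c0pos])
  show "\<And>u. u \<ge> 0 \<Longrightarrow> pf n a A u \<ge> 0" unfolding pfq using qpos by (simp add: less_imp_le)
  show "\<And>u. u > 0 \<Longrightarrow> pf n a A u > 0" unfolding pfq using qpos by simp
qed



lemma ev_pos:
  fixes c :: "nat \<Rightarrow> real"
  assumes n: "n \<ge> 1" and c1: "c 1 > 0"
  shows "eventually (\<lambda>u. (\<Sum>l=1..n. c l * u ^ (n - l)) > 0) at_top"
proof -
  have L: "((\<lambda>u::real. \<Sum>l=1..n. c l * inverse u ^ (l - 1)) \<longlongrightarrow> (\<Sum>l=1..n. c l * 0 ^ (l - 1))) at_top"
    by (intro tendsto_sum tendsto_mult tendsto_const tendsto_power tendsto_inverse_0_at_top filterlim_ident)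
  have U: "{1..n} = insert 1 {2..n}" using n by auto
  have "(\<Sum>l=1..n. c l * 0 ^ (l - 1)) = c 1"
  proof -
    have "(\<Sum>l=2..n. c l * (0::real) ^ (l - 1)) = 0" by (rule sum.neutral) auto
    then show ?thesis unfolding U by simp
  qed
  then have "eventually (\<lambda>u::real. (\<Sum>l=1..n. c l * inverse u ^ (l - 1)) > 0) at_top"
    using order_tendstoD(1)[OF L] c1 by simp
  moreover have "eventually (\<lambda>u::real. u > 0) at_top" by (rule eventually_gt_at_top)
  ultimately show ?thesis
  proof (rule eventually_elim2)
    fix u :: real assume pos: "(\<Sum>l=1..n. c l * inverse u ^ (l - 1)) > 0" and u: "u > 0"
    have "(\<Sum>l=1..n. c l * u ^ (n - l)) = u ^ (n - 1) * (\<Sum>l=1..n. c l * inverse u ^ (l - 1))"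
      unfolding sum_distrib_left
    proof (rule sum.cong[OF refl])
      fix l assume l: "l \<in> {1..n}"
      have "u ^ (n - 1) = u ^ (n - l) * u ^ (l - 1)" using l by (simp add: power_add[symmetric])
      then show "c l * u ^ (n - l) = u ^ (n - 1) * (c l * inverse u ^ (l - 1))"
        using u by (simp add: field_simps power_inverse)
    qed
    then show "(\<Sum>l=1..n. c l * u ^ (n - l)) > 0" using pos u by simp
  qed
qed

lemma comp_eps:
  fixes p r :: "real \<Rightarrow> real"
  assumes cp: "continuous_on UNIV p" and cr: "continuous_on UNIV r"
    and p0: "\<And>u. u \<ge> 0 \<Longrightarrow> p u \<ge> 0" and ppos: "\<And>u. u > 0 \<Longrightarrow> p u > 0"
    and r0: "r 0 > 0" and ev: "eventually (\<lambda>u. r u > 0) at_top"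
  shows "\<exists>\<epsilon>0>0. \<forall>\<epsilon>. 0 < \<epsilon> \<and> \<epsilon> < \<epsilon>0 \<longrightarrow> (\<forall>u\<ge>0. p u + \<epsilon> * r u > 0)"
proof -
  obtain U0 where U0: "\<And>u. u \<ge> U0 \<Longrightarrow> r u > 0" using ev unfolding eventually_at_top_linorder by blast
  define U where "U = max U0 0"
  define K where "K = {0..U}"
  have cK: "compact K" "K \<noteq> {}" unfolding K_def U_def by auto
  have hc: "continuous_on K (\<lambda>u. max (p u) (r u))"
    by (intro continuous_intros continuous_on_subset[OF cp] continuous_on_subset[OF cr]) auto
  obtain m0 where m0: "m0 \<in> K" "\<And>y. y \<in> K \<Longrightarrow> max (p m0) (r m0) \<le> max (p y) (r y)"
    using continuous_attains_inf[OF cK hc] by blast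
  define m where "m = max (p m0) (r m0)"
  have mpos: "m > 0"
  proof (cases "m0 = 0")
    case True then show ?thesis using r0 unfolding m_def by simp
  next
    case False then have "m0 > 0" using m0(1) unfolding K_def by auto
    then show ?thesis using ppos[of m0] unfolding m_def by simp
  qed
  have ac: "continuous_on K (\<lambda>u. \<bar>r u\<bar>)"
    by (intro continuous_intros continuous_on_subset[OF cr]) auto
  obtain M0 where M0: "M0 \<in> K" "\<And>y. y \<in> K \<Longrightarrow> \<bar>r y\<bar> \<le> \<bar>r M0\<bar>"
    using continuous_attains_sup[OF cK ac] by blast
  define M where "M = max 1 \<bar>r M0\<bar>"
  have Mpos: "M > 0" unfolding M_def by simp
  show ?thesis
  proof (intro exI[of _ "m / M"] conjI allI impI)
    show "0 < m / M" using mpos Mpos by simp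
    fix \<epsilon> u :: real assume e: "0 < \<epsilon> \<and> \<epsilon> < m / M" and u: "0 \<le> u"
    have eM: "\<epsilon> * M < m" using e Mpos by (simp add: field_simps)
    show "p u + \<epsilon> * r u > 0"
    proof (cases "u \<ge> U")
      case True
      then have "r u > 0" using U0 unfolding U_def by simp
      then show ?thesis using p0[OF u] e by (simp add: add_nonneg_pos)
    next
      case False
      then have uK: "u \<in> K" unfolding K_def using u by simp
      have hm: "max (p u) (r u) \<ge> m" using m0(2)[OF uK] unfolding m_def .
      show ?thesis
      proof (cases "p u \<ge> m")
        case True
        have "\<bar>r u\<bar> \<le> M" using M0(2)[OF uK] unfolding M_def by simp
        then have "\<epsilon> * \<bar>r u\<bar> \<le> \<epsilon> * M" using e by (simp add: mult_left_mono)
        moreover have "- (\<epsilon> * \<bar>r u\<bar>) \<le> \<epsilon> * r u" using e mult_left_mono[of "-\<bar>r u\<bar>" "r u" \<epsilon>] by simp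
        ultimately show ?thesis using True eM by linarith
      next
        case False
        then have "r u \<ge> m" using hm by simp
        then show ?thesis using p0[OF u] e mpos by (smt (verit) mult_pos_pos)
      qed
    qed
  qed
qed



definition fr :: "nat \<Rightarrow> (nat \<Rightarrow> real) \<Rightarrow> real \<Rightarrow> real" where
  "fr n a t = t ^ n + (\<Sum>j=1..n. a j * t ^ (n - j))"

lemma mpoly_real: "mpoly n a (complex_of_real t) = complex_of_real (fr n a t)"
  unfolding mpoly_def fr_def by simp

lemma mpoly_0:
  assumes "n \<ge> 1"
  shows "mpoly n a 0 = complex_of_real (a n)"
proof -
  have U: "{1..n} = insert n {1..<n}" using assms by auto
  have "(\<Sum>j=1..<n. complex_of_real (a j) * 0 ^ (n - j)) = 0" by (rule sum.neutral) auto
  then show ?thesis unfolding mpoly_def U using assms by simp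
qed

lemma an_pos:
  assumes st: "hurwitz_stable n a" and n: "n \<ge> 1"
  shows "a n > 0"
proof (rule ccontr)
  assume "\<not> a n > 0"
  moreover have "a n \<noteq> 0" using stable_nz[OF st, of 0] mpoly_0[OF n] by auto
  ultimately have neg: "fr n a 0 < 0" using mpoly_0[OF n] mpoly_real[of n a 0] by simp
  have "\<forall>\<^sub>F z in at_infinity. dist (gp n a z / z ^ n) 1 < 1/2"
    using tendstoD[OF gp_lim, of "1/2"] by simp
  then obtain b where b: "\<And>z. b \<le> norm z \<Longrightarrow> norm (gp n a z / z ^ n - 1) < 1/2"
    unfolding eventually_at_infinity dist_norm by blast
  define t where "t = max b 1"
  have t: "t \<ge> 1" "t \<ge> b" unfolding t_def by auto
  have "norm (gp n a (complex_of_real t) / complex_of_real t ^ n - 1) < 1/2" using b t by simp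
  then have "norm (complex_of_real (fr n a t / t ^ n) - 1) < 1/2"
    unfolding mpoly_gp[symmetric] mpoly_real by simp
  then have "\<bar>fr n a t / t ^ n - 1\<bar> < 1/2"
    by (metis norm_of_real of_real_1 of_real_diff)
  then have "fr n a t / t ^ n > 0" by linarith
  then have ft: "fr n a t > 0" using t by (simp add: zero_less_divide_iff)
  have "continuous_on {0..t} (fr n a)" unfolding fr_def by (intro continuous_intros)
  then obtain s where s: "0 \<le> s" "s \<le> t" "fr n a s = 0"
    using IVT'[of "fr n a" 0 0 t] neg ft t by auto
  then have "mpoly n a (complex_of_real s) = 0" using mpoly_real by simp
  then show False using stable_nz[OF st, of "complex_of_real s"] s by simp
qed

definition dv :: "nat \<Rightarrow> nat \<Rightarrow> real" where
  "dv n k = (if k = n - 1 then 1 else if k = 1 then -1 else 0)"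

lemma sum_ins2: "a \<noteq> b \<Longrightarrow> a \<notin> S \<Longrightarrow> b \<notin> S \<Longrightarrow> finite S \<Longrightarrow>
  sum f (insert a (insert b S)) = f a + (f b + sum f S)" by simp

lemma ceps_gp:
  assumes n: "n \<ge> 3"
  shows "ceps n x \<epsilon> z = gp (n-1) (\<lambda>k. x k + \<epsilon> * (dv n k - 0)) z"
proof -
  define xe where "xe = (\<lambda>k. x k + \<epsilon> * (dv n k - 0))"
  have U: "{1..n-1} = insert 1 (insert (n-1) {2..n-2})" using n by auto
  have n2: "1 \<noteq> n - 1" "1 \<notin> {2..n-2}" "n - 1 \<notin> {2..n-2}" using n by auto
  have xe1: "xe 1 = x 1 - \<epsilon>" using n unfolding xe_def dv_def by simp
  have xen: "xe (n - 1) = x (n - 1) + \<epsilon>" unfolding xe_def dv_def by simp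
  have "(\<Sum>k=1..n-1. complex_of_real (xe k) * z ^ (n - 1 - k)) =
      complex_of_real (xe 1) * z ^ (n - 1 - 1) + (complex_of_real (xe (n - 1)) * z ^ (n - 1 - (n - 1)) +
        (\<Sum>k=2..n-2. complex_of_real (xe k) * z ^ (n - 1 - k)))"
    unfolding U by (rule sum_ins2) (use n2 in auto)
  also have "complex_of_real (xe 1) * z ^ (n - 1 - 1) = complex_of_real (x 1 - \<epsilon>) * z ^ (n - 2)"
    unfolding xe1 by (simp add: numeral_2_eq_2)
  also have "complex_of_real (xe (n - 1)) * z ^ (n - 1 - (n - 1)) = complex_of_real (x (n - 1) + \<epsilon>)"
    unfolding xen by simp
  also have "(\<Sum>k=2..n-2. complex_of_real (xe k) * z ^ (n - 1 - k)) = (\<Sum>k=2..n-2. complex_of_real (x k) * z ^ (n - 1 - k))"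
    by (rule sum.cong) (auto simp: xe_def dv_def)
  finally show ?thesis unfolding ceps_def gp_def xe_def[symmetric] by (simp add: algebra_simps)
qed

lemma main_one:
  assumes st: "hurwitz_stable n a" and n: "n \<ge> 3" and x: "x \<in> Omega n a"
  shows "\<exists>\<epsilon>0>0. \<forall>\<epsilon>. 0 < \<epsilon> \<and> \<epsilon> < \<epsilon>0 \<longrightarrow>
     (\<forall>\<omega>::real. Re (ceps n x \<epsilon> (\<i> * complex_of_real \<omega>) / mpoly n a (\<i> * complex_of_real \<omega>)) > 0)"
proof -
  have n1: "n \<ge> 1" "n \<ge> 2" using n by auto
  obtain i j A B where ij: "1 \<le> i" "i < j" "j \<le> n - 2" and A: "A \<in> Omega_e n a i" and B: "B \<in> Omega_e n a j"
    and seg: "in_open_seg n A B x"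
    using x unfolding Omega_def by blast
  obtain t where t: "0 < t" "t < 1" and xt: "\<forall>k\<in>{1..n-1}. x k = (1 - t) * A k + t * B k"
    using seg unfolding in_open_seg_def by blast
  have xt': "\<forall>k\<in>{1..n-1}. x k = A k + t * (B k - A k)" using xt by (simp add: algebra_simps)
  define p where "p = pf n a x"
  have pAB: "p u = (1 - t) * pf n a A u + t * pf n a B u" for u
    unfolding p_def pf_def cfun_affine[OF xt'] sum_distrib_left sum.distrib[symmetric]
    by (rule sum.cong) (simp_all add: algebra_simps)
  have A0: "\<And>u. u \<ge> 0 \<Longrightarrow> pf n a A u \<ge> 0" and Ap: "\<And>u. u > 0 \<Longrightarrow> pf n a A u > 0"
    using Omega_e_pos[OF st n _ _ A] ij by auto
  have B0: "\<And>u. u \<ge> 0 \<Longrightarrow> pf n a B u \<ge> 0" and Bp: "\<And>u. u > 0 \<Longrightarrow> pf n a B u > 0"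
    using Omega_e_pos[OF st n _ _ B] ij by auto
  have p0: "p u \<ge> 0" if "u \<ge> 0" for u
    unfolding pAB using A0[OF that] B0[OF that] t by simp
  have ppos: "p u > 0" if "u > 0" for u
    unfolding pAB using Ap[OF that] Bp[OF that] t by (simp add: add_pos_pos)
  define rc where "rc l = cfun n a (dv n) l - cfun n a (\<lambda>_. 0) l" for l
  define r where "r u = (\<Sum>l=1..n. rc l * u ^ (n - l))" for u
  have rc1: "rc 1 = 1" unfolding rc_def cfun_1[OF n1(2)] dv_def using n by simp
  have rcn: "rc n = a n" unfolding rc_def cfun_n[OF n1(2)] dv_def by simp
  have r0: "r 0 = a n"
  proof -
    have U: "{1..n} = insert n {1..<n}" using n by auto
    have "(\<Sum>l=1..<n. rc l * (0::real) ^ (n - l)) = 0" by (rule sum.neutral) auto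
    then show ?thesis unfolding r_def U using rcn by simp
  qed
  have cp: "continuous_on UNIV p" unfolding p_def pf_def by (intro continuous_intros)
  have cr: "continuous_on UNIV r" unfolding r_def by (intro continuous_intros)
  have ev: "eventually (\<lambda>u. r u > 0) at_top" unfolding r_def by (rule ev_pos[OF n1(1)], subst rc1, simp)
  obtain \<epsilon>0 where e0: "\<epsilon>0 > 0" and E: "\<And>\<epsilon> u. 0 < \<epsilon> \<Longrightarrow> \<epsilon> < \<epsilon>0 \<Longrightarrow> u \<ge> 0 \<Longrightarrow> p u + \<epsilon> * r u > 0"
    using comp_eps[OF cp cr p0 ppos _ ev] r0 an_pos[OF st n1(1)] by auto
  show ?thesis
  proof (intro exI[of _ \<epsilon>0] conjI allI impI e0)
    fix \<epsilon> \<omega> :: real assume e: "0 < \<epsilon> \<and> \<epsilon> < \<epsilon>0"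
    define xe where "xe = (\<lambda>k. x k + \<epsilon> * (dv n k - 0))"
    have xe: "\<forall>k\<in>{1..n-1}. xe k = x k + \<epsilon> * (dv n k - 0)" unfolding xe_def by simp
    have pfe: "pf n a xe u = p u + \<epsilon> * r u" for u
      unfolding p_def r_def pf_def rc_def cfun_affine[OF xe] sum_distrib_left sum.distrib[symmetric]
      by (rule sum.cong) (simp_all add: algebra_simps)
    define w where "w = \<i> * complex_of_real \<omega>"
    have nz: "mpoly n a w \<noteq> 0" using stable_nz[OF st] unfolding w_def by simp
    have "Re (ceps n x \<epsilon> w / mpoly n a w) = Re (gp (n-1) xe w * cnj (mpoly n a w)) / (cmod (mpoly n a w))\<^sup>2"
      unfolding ceps_gp[OF n] xe_def by (rule Re_div_cnj)
    also have "Re (gp (n-1) xe w * cnj (mpoly n a w)) = p (\<omega>\<^sup>2) + \<epsilon> * r (\<omega>\<^sup>2)"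
      unfolding w_def Q_pf[OF n1(1)] pfe ..
    finally have eq: "Re (ceps n x \<epsilon> w / mpoly n a w) = (p (\<omega>\<^sup>2) + \<epsilon> * r (\<omega>\<^sup>2)) / (cmod (mpoly n a w))\<^sup>2" .
    have "p (\<omega>\<^sup>2) + \<epsilon> * r (\<omega>\<^sup>2) > 0" using E e by simp
    then show "Re (ceps n x \<epsilon> (\<i> * complex_of_real \<omega>) / mpoly n a (\<i> * complex_of_real \<omega>)) > 0"
      using eq nz unfolding w_def by simp
  qed
qed

theorem lemma2:
  fixes n :: nat and a b x :: "nat \<Rightarrow> real"
  assumes "n \<ge> 3"
    and "hurwitz_stable n a" and "hurwitz_stable n b"
    and "x \<in> Omega n a \<inter> Omega n b"
  shows "\<exists>\<epsilon>0>0. \<forall>\<epsilon>. 0 < \<epsilon> \<and> \<epsilon> < \<epsilon>0 \<longrightarrow>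
           (\<forall>\<omega>::real. Re (ceps n x \<epsilon> (\<i> * complex_of_real \<omega>) / mpoly n a (\<i> * complex_of_real \<omega>)) > 0 \<and>
                      Re (ceps n x \<epsilon> (\<i> * complex_of_real \<omega>) / mpoly n b (\<i> * complex_of_real \<omega>)) > 0)"
proof -
  obtain e1 where e1: "e1 > 0" "\<forall>\<epsilon>. 0 < \<epsilon> \<and> \<epsilon> < e1 \<longrightarrow>
     (\<forall>\<omega>::real. Re (ceps n x \<epsilon> (\<i> * complex_of_real \<omega>) / mpoly n a (\<i> * complex_of_real \<omega>)) > 0)"
    using main_one[OF assms(2,1)] assms(4) by blast
  obtain e2 where e2: "e2 > 0" "\<forall>\<epsilon>. 0 < \<epsilon> \<and> \<epsilon> < e2 \<longrightarrow>
     (\<forall>\<omega>::real. Re (ceps n x \<epsilon> (\<i> * complex_of_real \<omega>) / mpoly n b (\<i> * complex_of_real \<omega>)) > 0)"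
    using main_one[OF assms(3,1)] assms(4) by blast
  show ?thesis
    by (rule exI[of _ "min e1 e2"]) (use e1 e2 in auto)
qed


end
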